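(* Let $n\ge 1$, let $a=(a_m)_{m\ge 0}$ and $b=(b_m)_{m\ge0}$ be complex sequences with $b_0=0$ and $b_m\neq 0$ for all $m\ge1$, and let $(p_m)_{m\ge0}$ be the monic polynomials defined by $p_{-1}=0$, $p_0=1$, $p_{m+1}(x)=(x-a_m)p_m(x)-b_mp_{m-1}(x)$ for $m\ge0$; write $p_m(x)=\sum_{l=0}^{m}p^m_l x^l$ with $p^m_m=1$. Then the assignment $$W:\ \tilde t^{(r)}_{ij}\longmapsto t^{(r)}_{ij}+\sum_{l=0}^{r-1}p^r_l\,t^{(l)}_{ij}\qquad(1\le i,j\le n,\ r\ge1)$$ extends to an algebra isomorphism $W: OY(\mathfrak{gl}_n,a,b)\to Y(\mathfrak{gl}_n)$. On generating series it is given, for $i,j=1,\dots,n$, by $$W(\tilde T_{ij}(u))=\frac{1}{2\pi i}\oint_{|z|=1}K\!\left(z,\tfrac1u\right)t_{ij}(z)\,\frac{dz}{z}=\sum_{l\ge0}u^{-l}\sum_{m=0}^{l}p^l_m\,t^{(m)}_{ij}.$$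
   Context: The Yangian $Y(\mathfrak{gl}_n)$ is the unital associative $\mathbb C$-algebra with generators $t^{(r)}_{ij}$ ($1\le i,j\le n$, $r\in\{1,2,\dots\}$) and defining relations $[t^{(r+1)}_{ij},t^{(s)}_{kl}]-[t^{(r)}_{ij},t^{(s+1)}_{kl}]=t^{(r)}_{kj}t^{(s)}_{il}-t^{(s)}_{kj}t^{(r)}_{il}$ for all $r,s\ge0$ and all $i,j,k,l$, where $t^{(0)}_{ij}=\delta_{ij}$; put $t_{ij}(z)=\sum_{r\ge0}t^{(r)}_{ij}z^{-r}$. For complex sequences $a,b$, $OY(\mathfrak{gl}_n,a,b)$ is the unital associative $\mathbb C$-algebra with generators $\tilde t^{(r)}_{ij}$ ($1\le i,j\le n$, $r\ge1$) and defining relations $$[\tilde t^{(r+1)}_{ij}+a_r\tilde t^{(r)}_{ij}+b_r\tilde t^{(r-1)}_{ij},\tilde t^{(s)}_{kl}]-[\tilde t^{(r)}_{ij},\tilde t^{(s+1)}_{kl}+a_s\tilde t^{(s)}_{kl}+b_s\tilde t^{(s-1)}_{kl}]=\tilde t^{(r)}_{kj}\tilde t^{(s)}_{il}-\tilde t^{(s)}_{kj}\tilde t^{(r)}_{il}$$ for all $r,s\ge0$ and all $i,j,k,l$, with conventions $\tilde t^{(0)}_{ij}=\delta_{ij}$, $\tilde t^{(-1)}_{ij}=0$; put $\tilde T_{ij}(u)=\delta_{ij}+\sum_{r\ge1}\tilde t^{(r)}_{ij}u^{-r}$. The generating function of the polynomials is $K(z,u)=\sum_{l\ge0}p_l(z)u^l$.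 The contour integral is understood formally: $\frac{1}{2\pi i}\oint_{|z|=1}F(z)\frac{dz}{z}$ denotes the coefficient of $z^0$ of the formal expression $F(z)$, taken coefficientwise in $u^{-1}$. *)

theory Defs
  imports "HOL-Library.Poly_Mapping" "HOL-Computational_Algebra.Polynomial"
begin

text \<open>Elements of the free associative algebra over the complex numbers on generators
of type 'g: finitely supported complex-valued functions on words (lists of generators).\<close>

type_synonym 'g fa = "'g list \<Rightarrow>\<^sub>0 complex"

definition fa_one :: "'g fa" where
  "fa_one = Poly_Mapping.single [] 1"

definition fa_gen :: "'g \<Rightarrow> 'g fa" where
  "fa_gen g = Poly_Mapping.single [g] 1"

definition fa_mult :: "'g fa \<Rightarrow> 'g fa \<Rightarrow> 'g fa" where
  "fa_mult f h = (\<Sum>v\<in>Poly_Mapping.keys f. \<Sum>w\<in>Poly_Mapping.keys h.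
       Poly_Mapping.single (v @ w) (Poly_Mapping.lookup f v * Poly_Mapping.lookup h w))"

definition fa_smult :: "complex \<Rightarrow> 'g fa \<Rightarrow> 'g fa" where
  "fa_smult c f = fa_mult (Poly_Mapping.single [] c) f"

definition fa_comm :: "'g fa \<Rightarrow> 'g fa \<Rightarrow> 'g fa" where
  "fa_comm x y = fa_mult x y - fa_mult y x"

definition fa_on :: "'g set \<Rightarrow> 'g fa \<Rightarrow> bool" where
  "fa_on G f \<longleftrightarrow> (\<forall>w\<in>Poly_Mapping.keys f. set w \<subseteq> G)"

inductive_set fa_ideal :: "'g set \<Rightarrow> 'g fa set \<Rightarrow> 'g fa set" for G R where
  base: "r \<in> R \<Longrightarrow> r \<in> fa_ideal G R"
| zero: "0 \<in> fa_ideal G R"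
| add: "x \<in> fa_ideal G R \<Longrightarrow> y \<in> fa_ideal G R \<Longrightarrow> x + y \<in> fa_ideal G R"
| lmul: "fa_on G c \<Longrightarrow> x \<in> fa_ideal G R \<Longrightarrow> fa_mult c x \<in> fa_ideal G R"
| rmul: "fa_on G c \<Longrightarrow> x \<in> fa_ideal G R \<Longrightarrow> fa_mult x c \<in> fa_ideal G R"

fun fa_word :: "('g \<Rightarrow> 'h fa) \<Rightarrow> 'g list \<Rightarrow> 'h fa" where
  "fa_word \<phi> [] = fa_one"
| "fa_word \<phi> (g # w) = fa_mult (\<phi> g) (fa_word \<phi> w)"

definition fa_subst :: "('g \<Rightarrow> 'h fa) \<Rightarrow> 'g fa \<Rightarrow> 'h fa" where
  "fa_subst \<phi> f = (\<Sum>w\<in>Poly_Mapping.keys f. fa_smult (Poly_Mapping.lookup f w) (fa_word \<phi> w))"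

text \<open>The algebra homomorphism Phi from the free algebra on G1 to the free algebra on G2
induces an isomorphism of the presented algebras (free on G1)/(R1) and (free on G2)/(R2):
it maps the ideal into the ideal (well defined), only the ideal into the ideal (injective),
and is onto modulo the ideal (surjective).\<close>
definition induces_iso ::
  "'g set \<Rightarrow> 'g fa set \<Rightarrow> 'h set \<Rightarrow> 'h fa set \<Rightarrow> ('g \<Rightarrow> 'h fa) \<Rightarrow> bool" where
  "induces_iso G1 R1 G2 R2 \<phi> \<longleftrightarrow>
     (\<forall>g\<in>G1. fa_on G2 (\<phi> g)) \<and>
     (\<forall>x. fa_on G1 x \<longrightarrow> (fa_subst \<phi> x \<in> fa_ideal G2 R2 \<longleftrightarrow> x \<in> fa_ideal G1 R1)) \<and>
     (\<forall>y. fa_on G2 y \<longrightarrow> (\<exists>x. fa_on G1 x \<and> fa_subst \<phi> x - y \<in> fa_ideal G2 R2))"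

text \<open>Generators (i,j,r) stand for t^(r)_ij with 1 <= i,j <= n, r >= 1.\<close>
definition gens :: "nat \<Rightarrow> (nat \<times> nat \<times> nat) set" where
  "gens n = {(i, j, r). 1 \<le> i \<and> i \<le> n \<and> 1 \<le> j \<and> j \<le> n \<and> 1 \<le> r}"

definition tY :: "nat \<Rightarrow> nat \<Rightarrow> nat \<Rightarrow> (nat \<times> nat \<times> nat) fa" where
  "tY r i j = (if r = 0 then (if i = j then fa_one else 0) else fa_gen (i, j, r))"

definition yangian_rels :: "nat \<Rightarrow> (nat \<times> nat \<times> nat) fa set" where
  "yangian_rels n = {fa_comm (tY (r+1) i j) (tY s k l) - fa_comm (tY r i j) (tY (s+1) k l)
        - (fa_mult (tY r k j) (tY s i l) - fa_mult (tY s k j) (tY r i l)) | r s i j k l.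
        i \<in> {1..n} \<and> j \<in> {1..n} \<and> k \<in> {1..n} \<and> l \<in> {1..n}}"

text \<open>Same generator set, read as tilde t^(r)_ij; tilde t^(0)_ij = delta_ij.\<close>
abbreviation tO :: "nat \<Rightarrow> nat \<Rightarrow> nat \<Rightarrow> (nat \<times> nat \<times> nat) fa" where
  "tO \<equiv> tY"

definition tO_prev :: "nat \<Rightarrow> nat \<Rightarrow> nat \<Rightarrow> (nat \<times> nat \<times> nat) fa" where
  "tO_prev r i j = (if r = 0 then 0 else tO (r - 1) i j)"

definition tO_shift :: "(nat \<Rightarrow> complex) \<Rightarrow> (nat \<Rightarrow> complex) \<Rightarrow> nat \<Rightarrow> nat \<Rightarrow> nat
    \<Rightarrow> (nat \<times> nat \<times> nat) fa" where
  "tO_shift a b r i j = tO (r+1) i j + fa_smult (a r) (tO r i j) + fa_smult (b r) (tO_prev r i j)"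

definition oy_rels :: "nat \<Rightarrow> (nat \<Rightarrow> complex) \<Rightarrow> (nat \<Rightarrow> complex) \<Rightarrow> (nat \<times> nat \<times> nat) fa set" where
  "oy_rels n a b = {fa_comm (tO_shift a b r i j) (tO s k l) - fa_comm (tO r i j) (tO_shift a b s k l)
        - (fa_mult (tO r k j) (tO s i l) - fa_mult (tO s k j) (tO r i l)) | r s i j k l.
        i \<in> {1..n} \<and> j \<in> {1..n} \<and> k \<in> {1..n} \<and> l \<in> {1..n}}"

text \<open>p_0 = 1, p_1 = x - a_0 (since p_{-1} = 0), p_{m+1} = (x - a_m) p_m - b_m p_{m-1}.\<close>
fun pseq :: "(nat \<Rightarrow> complex) \<Rightarrow> (nat \<Rightarrow> complex) \<Rightarrow> nat \<Rightarrow> complex poly" where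
  "pseq a b 0 = 1"
| "pseq a b (Suc 0) = [:- a 0, 1:]"
| "pseq a b (Suc (Suc m)) = [:- a (Suc m), 1:] * pseq a b (Suc m) - smult (b (Suc m)) (pseq a b m)"

definition Wmap :: "(nat \<Rightarrow> complex) \<Rightarrow> (nat \<Rightarrow> complex) \<Rightarrow> nat \<times> nat \<times> nat
    \<Rightarrow> (nat \<times> nat \<times> nat) fa" where
  "Wmap a b g = (case g of (i, j, r) \<Rightarrow>
      tY r i j + (\<Sum>l<r. fa_smult (coeff (pseq a b r) l) (tY l i j)))"

text \<open>Formal contour integral: the coefficient of z^0 in P(z) * t(z), where
 t(z) = sum_r T_r z^(-r); this is sum_k [z^k]P * T_k.\<close>
definition z0_coeff :: "complex poly \<Rightarrow> (nat \<Rightarrow> 'g fa) \<Rightarrow> 'g fa" where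
  "z0_coeff P T = (\<Sum>k\<le>degree P. fa_smult (coeff P k) (T k))"

end

theory Submission
  imports Defs
begin

instantiation list :: (type) monoid_add
begin
definition zero_list_def: "0 = []"
definition plus_list_def: "xs + ys = xs @ ys"
instance by standard (auto simp: zero_list_def plus_list_def)
end

abbreviation sc :: "complex \<Rightarrow> 'g fa" where "sc c \<equiv> Poly_Mapping.single [] c"

lemma fa_expand: "(x::'g fa) = (\<Sum>v\<in>Poly_Mapping.keys x. Poly_Mapping.single v (Poly_Mapping.lookup x v))"
proof (rule poly_mapping_eqI)
  fix w
  have "Poly_Mapping.lookup (\<Sum>v\<in>Poly_Mapping.keys x. Poly_Mapping.single v (Poly_Mapping.lookup x v)) w
     = (\<Sum>v\<in>Poly_Mapping.keys x. Poly_Mapping.lookup (Poly_Mapping.single v (Poly_Mapping.lookup x v)) w)"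
    by (simp add: lookup_sum)
  also have "\<dots> = (\<Sum>v\<in>Poly_Mapping.keys x. if v = w then Poly_Mapping.lookup x v else 0)"
    by (intro sum.cong) (auto simp: lookup_single)
  also have "\<dots> = Poly_Mapping.lookup x w"
    by (auto simp: in_keys_iff)
  finally show "Poly_Mapping.lookup x w = Poly_Mapping.lookup (\<Sum>v\<in>Poly_Mapping.keys x. Poly_Mapping.single v (Poly_Mapping.lookup x v)) w" by simp
qed

lemma fa_mult_eq: "fa_mult f h = f * h"
proof -
  have "f * h = (\<Sum>v\<in>Poly_Mapping.keys f. Poly_Mapping.single v (Poly_Mapping.lookup f v)) *
     (\<Sum>w\<in>Poly_Mapping.keys h. Poly_Mapping.single w (Poly_Mapping.lookup h w))"
    using fa_expand[of f] fa_expand[of h] by simp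
  also have "\<dots> = fa_mult f h"
    unfolding fa_mult_def sum_distrib_left sum_distrib_right
    by (subst sum.swap) (simp add: mult_single plus_list_def sum_distrib_left sum_distrib_right)
  finally show ?thesis by simp
qed

lemma fa_one_eq: "fa_one = 1"
  by (simp add: fa_one_def zero_list_def[symmetric] one_poly_mapping.abs_eq)

lemma fa_smult_eq: "fa_smult c f = sc c * f"
  by (simp add: fa_smult_def fa_mult_eq)
lemma fa_comm_eq: "fa_comm x y = x * y - y * x"
  by (simp add: fa_comm_def fa_mult_eq)

lemma sc_mult[simp]: "sc c * sc d = sc (c * d)"
  by (simp add: mult_single plus_list_def)
lemma sc_single: "sc c * Poly_Mapping.single v d = Poly_Mapping.single v (c * d)"
  by (simp add: mult_single plus_list_def)
lemma single_sc: "Poly_Mapping.single v d * sc c = Poly_Mapping.single v (d * c)"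
  by (simp add: mult_single plus_list_def)
lemma sc_add: "sc (c + d) = sc c + sc d"
  by (simp add: single_add)
lemma sc_one[simp]: "sc 1 = 1"
  using fa_one_eq fa_one_def by metis
lemma sc_central: "(x::'g fa) * sc c = sc c * x"
proof -
  have "x * sc c = (\<Sum>v\<in>Poly_Mapping.keys x. Poly_Mapping.single v (Poly_Mapping.lookup x v)) * sc c"
    using fa_expand[of x] by simp
  also have "\<dots> = (\<Sum>v\<in>Poly_Mapping.keys x. sc c * Poly_Mapping.single v (Poly_Mapping.lookup x v))"
    by (simp add: sum_distrib_right single_sc sc_single mult.commute)
  also have "\<dots> = sc c * x"
    using fa_expand[of x] by (simp add: sum_distrib_left[symmetric])
  finally show ?thesis .
qed
lemma sc_left_commute: "(x::'g fa) * (sc c * y) = sc c * (x * y)"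
  by (metis mult.assoc sc_central)

lemma fa_word_append: "fa_word \<phi> (v @ w) = fa_word \<phi> v * fa_word \<phi> w"
  by (induction v) (auto simp: fa_mult_eq fa_one_eq mult.assoc)

lemma fa_subst_alt: "fa_subst \<phi> f = (\<Sum>v\<in>Poly_Mapping.keys f. sc (Poly_Mapping.lookup f v) * fa_word \<phi> v)"
  by (simp add: fa_subst_def fa_smult_eq)

lemma fa_subst_superset:
  assumes "finite S" "Poly_Mapping.keys f \<subseteq> S"
  shows "fa_subst \<phi> f = (\<Sum>v\<in>S. sc (Poly_Mapping.lookup f v) * fa_word \<phi> v)"
  unfolding fa_subst_alt
  by (rule sum.mono_neutral_left) (use assms in \<open>auto simp: in_keys_iff\<close>)

lemma fa_subst_add: "fa_subst \<phi> (x + y) = fa_subst \<phi> x + fa_subst \<phi> y"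
proof -
  let ?S = "Poly_Mapping.keys x \<union> Poly_Mapping.keys y"
  have "fa_subst \<phi> (x + y) = (\<Sum>v\<in>?S. sc (Poly_Mapping.lookup (x+y) v) * fa_word \<phi> v)"
    by (rule fa_subst_superset) (auto simp: keys_add)
  also have "\<dots> = (\<Sum>v\<in>?S. sc (Poly_Mapping.lookup x v) * fa_word \<phi> v)
      + (\<Sum>v\<in>?S. sc (Poly_Mapping.lookup y v) * fa_word \<phi> v)"
    by (simp add: lookup_add sc_add distrib_right sum.distrib)
  also have "\<dots> = fa_subst \<phi> x + fa_subst \<phi> y"
    by (subst (1 2) fa_subst_superset[where S="?S"]) auto
  finally show ?thesis .
qed

lemma fa_subst_zero[simp]: "fa_subst \<phi> 0 = 0"
  by (simp add: fa_subst_def)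

lemma fa_subst_sum: "fa_subst \<phi> (sum f A) = (\<Sum>a\<in>A. fa_subst \<phi> (f a))"
  by (induction A rule: infinite_finite_induct) (auto simp: fa_subst_add)

lemma fa_subst_single: "fa_subst \<phi> (Poly_Mapping.single v c) = sc c * fa_word \<phi> v"
  by (subst fa_subst_superset[where S="{v}"]) (auto simp: lookup_single)

lemma fa_subst_mult: "fa_subst \<phi> (x * y) = fa_subst \<phi> x * fa_subst \<phi> y"
proof -
  have "x * y = (\<Sum>v\<in>Poly_Mapping.keys x. Poly_Mapping.single v (Poly_Mapping.lookup x v)) *
     (\<Sum>w\<in>Poly_Mapping.keys y. Poly_Mapping.single w (Poly_Mapping.lookup y w))"
    using fa_expand[of x] fa_expand[of y] by simp
  also have "\<dots> = (\<Sum>v\<in>Poly_Mapping.keys x. \<Sum>w\<in>Poly_Mapping.keys y.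
        Poly_Mapping.single (v @ w) (Poly_Mapping.lookup x v * Poly_Mapping.lookup y w))"
    by (simp add: sum_distrib_left sum_distrib_right mult_single plus_list_def) (rule sum.swap)
  finally have "fa_subst \<phi> (x * y) = (\<Sum>v\<in>Poly_Mapping.keys x. \<Sum>w\<in>Poly_Mapping.keys y.
        sc (Poly_Mapping.lookup x v * Poly_Mapping.lookup y w) * (fa_word \<phi> v * fa_word \<phi> w))"
    by (simp add: fa_subst_sum fa_subst_single fa_word_append)
  also have "\<dots> = fa_subst \<phi> x * fa_subst \<phi> y"
    unfolding fa_subst_alt sum_product
    by (intro sum.cong refl) (metis mult.assoc sc_left_commute sc_mult)
  finally show ?thesis .
qed

lemma fa_subst_sc[simp]: "fa_subst \<phi> (sc c) = sc c"
  by (simp add: fa_subst_single fa_one_eq)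
lemma fa_subst_one[simp]: "fa_subst \<phi> 1 = 1"
  using fa_subst_sc[of \<phi> 1] by simp
lemma fa_subst_gen[simp]: "fa_subst \<phi> (fa_gen g) = \<phi> g"
  by (simp add: fa_gen_def fa_subst_single fa_mult_eq fa_one_eq)
lemma fa_subst_uminus: "fa_subst \<phi> (- x) = - fa_subst \<phi> x"
  by (metis add_eq_0_iff fa_subst_add fa_subst_zero neg_eq_iff_add_eq_0)
lemma fa_subst_diff: "fa_subst \<phi> (x - y) = fa_subst \<phi> x - fa_subst \<phi> y"
  using fa_subst_add[of \<phi> x "- y"] fa_subst_uminus[of \<phi> y] by simp

lemma fa_word_subst: "fa_subst \<psi> (fa_word \<phi> v) = fa_word (\<lambda>g. fa_subst \<psi> (\<phi> g)) v"
  by (induction v) (auto simp: fa_subst_mult fa_mult_eq fa_one_eq)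

lemma fa_subst_comp: "fa_subst \<psi> (fa_subst \<phi> x) = fa_subst (\<lambda>g. fa_subst \<psi> (\<phi> g)) x"
  by (simp add: fa_subst_alt[of \<phi>] fa_subst_alt[of "\<lambda>g. fa_subst \<psi> (\<phi> g)"] fa_subst_sum
     fa_subst_mult fa_word_subst)

lemma fa_word_cong: "set v \<subseteq> G \<Longrightarrow> (\<And>g. g \<in> G \<Longrightarrow> \<phi> g = \<psi> g) \<Longrightarrow> fa_word \<phi> v = fa_word \<psi> v"
  by (induction v) auto

lemma fa_subst_cong: "fa_on G x \<Longrightarrow> (\<And>g. g \<in> G \<Longrightarrow> \<phi> g = \<psi> g) \<Longrightarrow> fa_subst \<phi> x = fa_subst \<psi> x"
  unfolding fa_subst_alt fa_on_def
  by (intro sum.cong refl arg_cong2[where f="(*)"] fa_word_cong) auto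

lemma fa_word_gen: "fa_word fa_gen v = Poly_Mapping.single v 1"
  by (induction v) (auto simp: fa_one_def fa_gen_def fa_mult_eq mult_single plus_list_def)

lemma fa_subst_id: "fa_subst fa_gen x = x"
  unfolding fa_subst_alt fa_word_gen
  by (subst (2) fa_expand) (simp add: sc_single)

lemma fa_subst_id_on: "fa_on G x \<Longrightarrow> (\<And>g. g \<in> G \<Longrightarrow> \<phi> g = fa_gen g) \<Longrightarrow> fa_subst \<phi> x = x"
  using fa_subst_cong[of G x \<phi> fa_gen] fa_subst_id by metis


lemma set_plus_list[simp]: "set (v + w) = set v \<union> set w"
  by (simp add: plus_list_def)

lemma fa_on_iff: "fa_on G x \<longleftrightarrow> Poly_Mapping.keys x \<subseteq> {w. set w \<subseteq> G}"
  by (auto simp: fa_on_def)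
lemma fa_on_zero[simp]: "fa_on G 0"
  by (simp add: fa_on_def)
lemma fa_on_sc[simp]: "fa_on G (sc c)"
  by (simp add: fa_on_def)
lemma fa_on_one[simp]: "fa_on G 1"
  using fa_on_sc[of G 1] by simp
lemma fa_on_add: "fa_on G x \<Longrightarrow> fa_on G y \<Longrightarrow> fa_on G (x + y)"
  unfolding fa_on_iff using keys_add[of x y] by blast
lemma fa_on_mult: "fa_on G x \<Longrightarrow> fa_on G y \<Longrightarrow> fa_on G (x * y)"
  unfolding fa_on_iff using keys_mult[of x y] by force
lemma fa_on_uminus: "fa_on G x \<Longrightarrow> fa_on G (- x)"
  unfolding fa_on_iff by simp
lemma fa_on_diff: "fa_on G x \<Longrightarrow> fa_on G y \<Longrightarrow> fa_on G (x - y)"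
  using fa_on_add[of G x "- y"] fa_on_uminus[of G y] by simp
lemma fa_on_sum: "(\<And>a. a \<in> A \<Longrightarrow> fa_on G (f a)) \<Longrightarrow> fa_on G (sum f A)"
  by (induction A rule: infinite_finite_induct) (auto intro: fa_on_add)
lemma fa_on_gen: "g \<in> G \<Longrightarrow> fa_on G (fa_gen g)"
  by (simp add: fa_on_def fa_gen_def)
lemma fa_on_word: "set v \<subseteq> G \<Longrightarrow> (\<forall>g\<in>G. fa_on G' (\<phi> g)) \<Longrightarrow> fa_on G' (fa_word \<phi> v)"
  by (induction v) (auto simp: fa_mult_eq fa_one_eq intro: fa_on_mult)
lemma fa_on_subst: "(\<forall>g\<in>G. fa_on G' (\<phi> g)) \<Longrightarrow> fa_on G x \<Longrightarrow> fa_on G' (fa_subst \<phi> x)"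
  unfolding fa_subst_alt
  by (intro fa_on_sum fa_on_mult fa_on_sc fa_on_word) (auto simp: fa_on_def)

lemma ideal_sc: "x \<in> fa_ideal G R \<Longrightarrow> sc c * x \<in> fa_ideal G R"
  using fa_ideal.lmul[of G "sc c" x R] by (simp add: fa_mult_eq)
lemma ideal_lmul: "fa_on G c \<Longrightarrow> x \<in> fa_ideal G R \<Longrightarrow> c * x \<in> fa_ideal G R"
  using fa_ideal.lmul[of G c x R] by (simp add: fa_mult_eq)
lemma ideal_rmul: "fa_on G c \<Longrightarrow> x \<in> fa_ideal G R \<Longrightarrow> x * c \<in> fa_ideal G R"
  using fa_ideal.rmul[of G c x R] by (simp add: fa_mult_eq)
lemma ideal_uminus: "- x \<in> fa_ideal G R" if "x \<in> fa_ideal G R"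
proof -
  have "sc (-1) * x = - x" by (simp add: single_uminus)
  then show ?thesis using ideal_sc[of x G R "-1"] that by simp
qed
lemma ideal_diff: "x \<in> fa_ideal G R \<Longrightarrow> y \<in> fa_ideal G R \<Longrightarrow> x - y \<in> fa_ideal G R"
  using fa_ideal.add[OF _ ideal_uminus] by (metis diff_conv_add_uminus)
lemma ideal_sum: "(\<And>a. a \<in> A \<Longrightarrow> f a \<in> fa_ideal G R) \<Longrightarrow> sum f A \<in> fa_ideal G R"
  by (induction A rule: infinite_finite_induct) (auto intro: fa_ideal.intros)

lemma ideal_hom:
  assumes "\<forall>g\<in>G. fa_on G' (\<phi> g)" "\<forall>r\<in>R. fa_subst \<phi> r \<in> fa_ideal G' R'"
    and "x \<in> fa_ideal G R"
  shows "fa_subst \<phi> x \<in> fa_ideal G' R'"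
  using assms(3)
proof induction
  case (lmul c x) then show ?case
    using assms(1) by (auto simp: fa_mult_eq fa_subst_mult intro: ideal_lmul fa_on_subst)
next
  case (rmul c x) then show ?case
    using assms(1) by (auto simp: fa_mult_eq fa_subst_mult intro: ideal_rmul fa_on_subst)
qed (use assms(2) in \<open>auto simp: fa_subst_add intro: fa_ideal.intros\<close>)


lemma pseq_deg_lead: "degree (pseq a b m) = m \<and> coeff (pseq a b m) m = 1"
proof (induction a b m rule: pseq.induct)
  case (3 a b m)
  let ?q = "[:- a (Suc m), 1:] * pseq a b (Suc m)"
  let ?r = "smult (b (Suc m)) (pseq a b m)"
  have nz: "pseq a b (Suc m) \<noteq> 0" using 3(1) by auto
  have dq: "degree ?q = Suc (Suc m)"
    using 3(1) nz by (subst degree_mult_eq) auto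
  have cq: "coeff ?q (Suc (Suc m)) = 1"
    using 3(1) coeff_mult_degree_sum[of "[:- a (Suc m), 1:]" "pseq a b (Suc m)"] by simp
  have dr: "degree ?r < degree ?q" using dq 3(2) by (simp add: degree_smult_le le_less_trans)
  have cr: "coeff ?r (Suc (Suc m)) = 0"
    using 3(2) by (simp add: coeff_eq_0)
  have "degree (?q - ?r) = Suc (Suc m)"
    using dr dq degree_add_eq_left[of "- ?r" ?q] by simp
  then show ?case using cq cr by simp
qed auto

lemma pseq_degree[simp]: "degree (pseq a b m) = m"
  using pseq_deg_lead by blast
lemma pseq_lead[simp]: "coeff (pseq a b m) m = 1"
  using pseq_deg_lead by blast

definition Pprev :: "(nat \<Rightarrow> complex) \<Rightarrow> (nat \<Rightarrow> complex) \<Rightarrow> nat \<Rightarrow> complex poly" where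
  "Pprev a b r = (if r = 0 then 0 else pseq a b (r - 1))"

lemma pseq_shift: "[:0, 1:] * pseq a b r = pseq a b (Suc r) + smult (a r) (pseq a b r) + smult (b r) (Pprev a b r)"
proof (cases r)
  case 0 then show ?thesis by (simp add: Pprev_def)
next
  case (Suc m)
  have e: "[:0, 1:] = [:- a (Suc m), 1:] + [:a (Suc m):]" by simp
  have "[:0, 1:] * pseq a b r = [:- a (Suc m), 1:] * pseq a b r + smult (a (Suc m)) (pseq a b r)"
    by (subst e, simp only: distrib_right) simp
  then show ?thesis using Suc by (simp add: Pprev_def)
qed

definition Lin :: "(nat \<Rightarrow> 'g fa) \<Rightarrow> complex poly \<Rightarrow> 'g fa" where
  "Lin T p = (\<Sum>k\<le>degree p. sc (coeff p k) * T k)"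

lemma z0_Lin: "z0_coeff p T = Lin T p"
  by (simp add: z0_coeff_def Lin_def fa_smult_eq)

lemma Lin_bound: "degree p \<le> N \<Longrightarrow> Lin T p = (\<Sum>k\<le>N. sc (coeff p k) * T k)"
  unfolding Lin_def
  by (rule sum.mono_neutral_left) (auto simp: coeff_eq_0)

lemma Lin_add: "Lin T (p + q) = Lin T p + Lin T q"
proof -
  let ?N = "max (degree p) (degree q)"
  have "degree (p + q) \<le> ?N" by (rule degree_add_le) auto
  then show ?thesis
    by (simp add: Lin_bound[where N="?N"] sc_add distrib_right sum.distrib)
qed

lemma Lin_smult: "Lin T (smult c p) = sc c * Lin T p"
  by (simp add: Lin_bound[where N="degree p"] degree_smult_le sum_distrib_left mult.assoc flip: sc_mult)

lemma Lin_monom: "Lin T (monom 1 r) = T r"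
proof -
  have "\<And>k. sc (if r = k then 1 else 0) * T k = (if r = k then T k else 0)" by simp
  then show ?thesis by (simp add: Lin_bound[where N=r] degree_monom_le coeff_monom)
qed

lemma Lin_zero[simp]: "Lin T 0 = 0"
  by (simp add: Lin_def)

lemma Lin_diff: "Lin T (p - q) = Lin T p - Lin T q"
  using Lin_add[of T "p - q" q] by (simp add: algebra_simps)

lemma lin_sum_ideal:
  assumes add: "\<And>p q. f (p + q) = f p + f q"
    and hom: "\<And>c p. f (smult c p) = sc c * f p"
    and mem: "\<And>l. f (B l) \<in> fa_ideal G R"
  shows "f (\<Sum>l\<le>N. smult (c l) (B l)) \<in> fa_ideal G R"
proof -
  have f0: "f 0 = 0" using add[of 0 0] by simp
  have "f (\<Sum>l\<in>A. smult (c l) (B l)) = (\<Sum>l\<in>A. sc (c l) * f (B l))" for A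
    by (induction A rule: infinite_finite_induct) (auto simp: f0 add hom)
  then show ?thesis using mem by (auto intro!: ideal_sum ideal_sc)
qed

lemma monom_span: "(p::complex poly) = (\<Sum>l\<le>degree p. smult (coeff p l) (monom 1 l))"
proof -
  have "smult (coeff p l) (monom 1 l) = monom (coeff p l) l" for l
    by (simp add: smult_monom)
  then show ?thesis using poly_as_sum_of_monoms[of p] by presburger
qed

lemma P_span: "degree p \<le> N \<Longrightarrow> \<exists>c. p = (\<Sum>l\<le>N. smult (c l) (pseq a b l))"
proof (induction N arbitrary: p)
  case 0
  then obtain c where "p = [:c:]" by (metis degree_eq_zeroE le_zero_eq)
  then show ?case by (intro exI[of _ "\<lambda>_. c"]) simp
next
  case (Suc N)
  let ?p' = "p - smult (coeff p (Suc N)) (pseq a b (Suc N))"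
  have "degree ?p' \<le> Suc N"
    using Suc.prems by (intro degree_diff_le) (auto simp: degree_smult_le le_trans)
  moreover have cz: "coeff ?p' (Suc N) = 0" by simp
  moreover have "degree ?p' \<noteq> Suc N"
  proof
    assume d: "degree ?p' = Suc N"
    then have "?p' = 0" using cz leading_coeff_0_iff[of ?p'] by simp
    then show False using d by simp
  qed
  ultimately have "degree ?p' \<le> N" by linarith
  then obtain c where c: "?p' = (\<Sum>l\<le>N. smult (c l) (pseq a b l))" using Suc.IH by blast
  let ?c = "c(Suc N := coeff p (Suc N))"
  have "(\<Sum>l\<le>Suc N. smult (?c l) (pseq a b l)) = (\<Sum>l\<le>N. smult (c l) (pseq a b l)) + smult (coeff p (Suc N)) (pseq a b (Suc N))"
    by (simp add: sum.atMost_Suc)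
  also have "\<dots> = p" by (metis c diff_add_cancel)
  finally show ?case by metis
qed

lemma P_indep: "(\<Sum>l\<le>N. smult (c l) (pseq a b l)) = 0 \<Longrightarrow> l \<le> N \<Longrightarrow> c l = 0"
proof (induction N arbitrary: l)
  case 0 then show ?case by simp
next
  case (Suc N)
  have "coeff (\<Sum>l\<le>N. smult (c l) (pseq a b l)) (Suc N) = 0"
    by (intro coeff_eq_0 le_less_trans[OF degree_sum_le]) (auto simp: degree_smult_le le_less_trans)
  then have cN: "c (Suc N) = 0"
    using arg_cong[OF Suc.prems(1), of "\<lambda>p. coeff p (Suc N)"] by simp
  then have "(\<Sum>l\<le>N. smult (c l) (pseq a b l)) = 0" using Suc.prems(1) by simp
  then show ?case using Suc.IH Suc.prems(2) cN by (cases "l = Suc N") auto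
qed


lemma lin_sum:
  assumes add: "\<And>p q. f (p + q) = f p + f q"
    and hom: "\<And>c p. f (smult c p) = sc c * f p"
  shows "f (\<Sum>l\<in>A. smult (c l) (B l)) = (\<Sum>l\<in>A. sc (c l) * f (B l))"
proof -
  have f0: "f 0 = 0" using add[of 0 0] by simp
  show ?thesis
    by (induction A rule: infinite_finite_induct) (auto simp: f0 add hom)
qed

definition coordP :: "(nat \<Rightarrow> complex) \<Rightarrow> (nat \<Rightarrow> complex) \<Rightarrow> complex poly \<Rightarrow> nat \<Rightarrow> complex" where
  "coordP a b p = (SOME c. p = (\<Sum>l\<le>degree p. smult (c l) (pseq a b l)))"

lemma coordP_spec: "p = (\<Sum>l\<le>degree p. smult (coordP a b p l) (pseq a b l))"
proof -
  have "\<exists>c. p = (\<Sum>l\<le>degree p. smult (c l) (pseq a b l))" by (rule P_span) simp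
  then show ?thesis unfolding coordP_def by (rule someI_ex)
qed

definition Lam :: "(nat \<Rightarrow> complex) \<Rightarrow> (nat \<Rightarrow> complex) \<Rightarrow> (nat \<Rightarrow> 'g fa) \<Rightarrow> complex poly \<Rightarrow> 'g fa" where
  "Lam a b T p = (\<Sum>l\<le>degree p. sc (coordP a b p l) * T l)"

lemma Lam_repr:
  assumes p: "p = (\<Sum>l\<le>N. smult (c l) (pseq a b l))"
  shows "Lam a b T p = (\<Sum>l\<le>N. sc (c l) * T l)"
proof -
  let ?d = "degree p"
  let ?c0 = "coordP a b p"
  define c2 where "c2 l = (if l \<le> ?d then ?c0 l else 0)" for l
  have dN: "?d \<le> N" unfolding p
    by (rule degree_sum_le) auto
  have s2: "(\<Sum>l\<le>N. smult (c2 l) (pseq a b l)) = p"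
  proof -
    have "(\<Sum>l\<le>N. smult (c2 l) (pseq a b l)) = (\<Sum>l\<le>?d. smult (c2 l) (pseq a b l))"
      by (rule sum.mono_neutral_right) (use dN in \<open>auto simp: c2_def\<close>)
    also have "\<dots> = (\<Sum>l\<le>?d. smult (?c0 l) (pseq a b l))"
      by (rule sum.cong) (auto simp: c2_def)
    also have "\<dots> = p" using coordP_spec[of p a b] by simp
    finally show ?thesis .
  qed
  have "(\<Sum>l\<le>N. smult (c l - c2 l) (pseq a b l)) = p - p"
    by (subst p) (simp add: smult_diff_left sum_subtractf s2)
  then have eq: "l \<le> N \<Longrightarrow> c l = c2 l" for l
    using P_indep[where N=N and c="\<lambda>l. c l - c2 l" and l=l] by simp
  have "Lam a b T p = (\<Sum>l\<le>?d. sc (c2 l) * T l)"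
    unfolding Lam_def by (rule sum.cong) (auto simp: c2_def)
  also have "\<dots> = (\<Sum>l\<le>N. sc (c2 l) * T l)"
    by (rule sum.mono_neutral_left) (use dN in \<open>auto simp: c2_def\<close>)
  also have "\<dots> = (\<Sum>l\<le>N. sc (c l) * T l)"
    by (rule sum.cong) (auto simp: eq)
  finally show ?thesis .
qed

lemma Lam_add: "Lam a b T (p + q) = Lam a b T p + Lam a b T q"
proof -
  let ?N = "max (degree p) (degree q)"
  obtain c where c: "p = (\<Sum>l\<le>?N. smult (c l) (pseq a b l))" using P_span[of p ?N a b] by auto
  obtain d where d: "q = (\<Sum>l\<le>?N. smult (d l) (pseq a b l))" using P_span[of q ?N a b] by auto
  have "p + q = (\<Sum>l\<le>?N. smult (c l + d l) (pseq a b l))"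
    by (subst c, subst d) (simp add: smult_add_left sum.distrib)
  then have "Lam a b T (p + q) = (\<Sum>l\<le>?N. sc (c l + d l) * T l)" by (rule Lam_repr)
  then show ?thesis
    by (simp add: Lam_repr[OF c] Lam_repr[OF d] sc_add distrib_right sum.distrib)
qed

lemma Lam_smult: "Lam a b T (smult k p) = sc k * Lam a b T p"
proof -
  obtain c where c: "p = (\<Sum>l\<le>degree p. smult (c l) (pseq a b l))" using P_span[of p "degree p" a b] by auto
  have "smult k p = (\<Sum>l\<le>degree p. smult (k * c l) (pseq a b l))"
  proof -
    have "smult k p = [:k:] * (\<Sum>l\<le>degree p. smult (c l) (pseq a b l))" using c by simp
    also have "\<dots> = (\<Sum>l\<le>degree p. [:k:] * smult (c l) (pseq a b l))" by (rule sum_distrib_left)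
    finally show ?thesis by (simp add: mult.commute)
  qed
  then have "Lam a b T (smult k p) = (\<Sum>l\<le>degree p. sc (k * c l) * T l)" by (rule Lam_repr)
  then show ?thesis
    by (simp add: Lam_repr[OF c] sum_distrib_left mult.assoc flip: sc_mult)
qed

lemma Lam_P: "Lam a b T (pseq a b r) = T r"
proof -
  have e: "\<And>l. smult (if l = r then 1 else 0) (pseq a b l) = (if l = r then pseq a b l else 0)" by simp
  have "pseq a b r = (\<Sum>l\<le>r. smult (if l = r then 1 else 0) (pseq a b l))"
    by (simp only: e) simp
  then have "Lam a b T (pseq a b r) = (\<Sum>l\<le>r. sc (if l = r then 1 else 0) * T l)"
    by (rule Lam_repr)
  also have "\<dots> = (\<Sum>l\<le>r. if l = r then T l else 0)"
    by (rule sum.cong) auto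
  finally show ?thesis by simp
qed

lemma Lam_zero[simp]: "Lam a b T 0 = 0"
  using Lam_smult[of a b T 0 0] by simp


definition linop :: "(complex poly \<Rightarrow> 'g fa) \<Rightarrow> bool" where
  "linop X \<longleftrightarrow> (\<forall>p q. X (p + q) = X p + X q) \<and> (\<forall>c p. X (smult c p) = sc c * X p)"

definition Rel :: "(complex poly \<Rightarrow> 'g fa) \<Rightarrow> (complex poly \<Rightarrow> 'g fa) \<Rightarrow> (complex poly \<Rightarrow> 'g fa)
   \<Rightarrow> (complex poly \<Rightarrow> 'g fa) \<Rightarrow> complex poly \<Rightarrow> complex poly \<Rightarrow> 'g fa" where
  "Rel X Y Z U p q = (X ([:0, 1:] * p) * Y q - Y q * X ([:0, 1:] * p))
     - (X p * Y ([:0, 1:] * q) - Y ([:0, 1:] * q) * X p) - (Z p * U q - Z q * U p)"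

lemma linopD: "linop X \<Longrightarrow> X (p + q) = X p + X q" "linop X \<Longrightarrow> X (smult c p) = sc c * X p"
  by (auto simp: linop_def)

lemma Rel_add1:
  assumes "linop X" "linop Y" "linop Z" "linop U"
  shows "Rel X Y Z U (p1 + p2) q = Rel X Y Z U p1 q + Rel X Y Z U p2 q"
  unfolding Rel_def distrib_left
  by (simp only: linopD[OF assms(1)] linopD[OF assms(2)] linopD[OF assms(3)] linopD[OF assms(4)])
    (simp add: distrib_left distrib_right algebra_simps)

lemma Rel_add2:
  assumes "linop X" "linop Y" "linop Z" "linop U"
  shows "Rel X Y Z U p (q1 + q2) = Rel X Y Z U p q1 + Rel X Y Z U p q2"
  unfolding Rel_def distrib_left
  by (simp only: linopD[OF assms(1)] linopD[OF assms(2)] linopD[OF assms(3)] linopD[OF assms(4)])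
    (simp add: distrib_left distrib_right algebra_simps)

lemma Rel_smult1:
  assumes "linop X" "linop Y" "linop Z" "linop U"
  shows "Rel X Y Z U (smult c p) q = sc c * Rel X Y Z U p q"
  unfolding Rel_def mult_smult_right
  by (simp only: linopD[OF assms(1)] linopD[OF assms(2)] linopD[OF assms(3)] linopD[OF assms(4)])
    (simp add: right_diff_distrib mult.assoc sc_left_commute)

lemma Rel_smult2:
  assumes "linop X" "linop Y" "linop Z" "linop U"
  shows "Rel X Y Z U p (smult c q) = sc c * Rel X Y Z U p q"
  unfolding Rel_def mult_smult_right
  by (simp only: linopD[OF assms(1)] linopD[OF assms(2)] linopD[OF assms(3)] linopD[OF assms(4)])
    (simp add: right_diff_distrib mult.assoc sc_left_commute)

lemma rel_ideal:
  assumes lin: "linop X" "linop Y" "linop Z" "linop U"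
    and span: "\<And>p. \<exists>N c. p = (\<Sum>l\<le>N. smult (c l) (B l))"
    and mem: "\<And>r s. Rel X Y Z U (B r) (B s) \<in> fa_ideal G R"
  shows "Rel X Y Z U p q \<in> fa_ideal G R"
proof -
  obtain N c where c: "p = (\<Sum>l\<le>N. smult (c l) (B l))" using span by blast
  obtain M d where d: "q = (\<Sum>l\<le>M. smult (d l) (B l))" using span by blast
  have "Rel X Y Z U (B r) q \<in> fa_ideal G R" for r
    unfolding d by (rule lin_sum_ideal[where f="Rel X Y Z U (B r)"])
      (auto simp: Rel_add2[OF lin] Rel_smult2[OF lin] mem)
  then show ?thesis
    unfolding c by (intro lin_sum_ideal[where f="\<lambda>p. Rel X Y Z U p q"])
      (auto simp: Rel_add1[OF lin] Rel_smult1[OF lin])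
qed

lemma linop_Lin: "linop (Lin T)"
  by (simp add: linop_def Lin_add Lin_smult)
lemma linop_Lam: "linop (Lam a b T)"
  by (simp add: linop_def Lam_add Lam_smult)

definition Vmap :: "(nat \<Rightarrow> complex) \<Rightarrow> (nat \<Rightarrow> complex) \<Rightarrow> nat \<times> nat \<times> nat
    \<Rightarrow> (nat \<times> nat \<times> nat) fa" where
  "Vmap a b g = (case g of (i, j, r) \<Rightarrow> Lam a b (\<lambda>l. tY l i j) (monom 1 r))"

lemma Lin_one: "Lin T 1 = T 0"
  by (simp add: Lin_bound[where N=0])

lemma tY0_subst: "fa_subst \<phi> (tY 0 i j) = tY 0 i j"
  by (simp add: tY_def fa_one_eq)

lemma W_tY: "fa_subst (Wmap a b) (tY r i j) = Lin (\<lambda>l. tY l i j) (pseq a b r)"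
proof (cases r)
  case 0 then show ?thesis by (simp add: tY0_subst Lin_one)
next
  case (Suc m)
  have "Lin (\<lambda>l. tY l i j) (pseq a b r) = (\<Sum>k\<le>Suc m. sc (coeff (pseq a b r) k) * tY k i j)"
    using Suc by (simp add: Lin_bound[where N="Suc m"])
  also have "\<dots> = tY r i j + (\<Sum>k<r. sc (coeff (pseq a b r) k) * tY k i j)"
    using Suc by (simp add: sum.atMost_Suc lessThan_Suc_atMost[symmetric] add.commute)
  finally show ?thesis using Suc
    by (simp add: tY_def Wmap_def fa_smult_eq)
qed

lemma V_tY: "fa_subst (Vmap a b) (tY r i j) = Lam a b (\<lambda>l. tY l i j) (monom 1 r)"
proof (cases r)
  case 0
  have "Lam a b (\<lambda>l. tY l i j) (monom 1 0) = tY 0 i j"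
    using Lam_P[of a b "\<lambda>l. tY l i j" 0] by (simp add: one_pCons monom_0)
  then show ?thesis using 0 by (simp add: tY0_subst)
next
  case (Suc m) then show ?thesis by (simp add: tY_def Vmap_def)
qed

lemma V_Lin: "fa_subst (Vmap a b) (Lin (\<lambda>l. tY l i j) p) = Lam a b (\<lambda>l. tY l i j) p"
proof -
  have "fa_subst (Vmap a b) (Lin (\<lambda>l. tY l i j) p)
      = (\<Sum>k\<le>degree p. sc (coeff p k) * Lam a b (\<lambda>l. tY l i j) (monom 1 k))"
    by (simp add: Lin_def fa_subst_sum fa_subst_mult V_tY)
  also have "\<dots> = Lam a b (\<lambda>l. tY l i j) (\<Sum>k\<le>degree p. smult (coeff p k) (monom 1 k))"
    by (rule lin_sum[symmetric]) (simp_all add: Lam_add Lam_smult)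
  also have "\<dots> = Lam a b (\<lambda>l. tY l i j) p"
    using monom_span[of p] by simp
  finally show ?thesis .
qed

lemma W_Lam: "fa_subst (Wmap a b) (Lam a b (\<lambda>l. tY l i j) p) = Lin (\<lambda>l. tY l i j) p"
proof -
  have "fa_subst (Wmap a b) (Lam a b (\<lambda>l. tY l i j) p)
      = (\<Sum>k\<le>degree p. sc (coordP a b p k) * Lin (\<lambda>l. tY l i j) (pseq a b k))"
    by (simp add: Lam_def fa_subst_sum fa_subst_mult W_tY)
  also have "\<dots> = Lin (\<lambda>l. tY l i j) (\<Sum>k\<le>degree p. smult (coordP a b p k) (pseq a b k))"
    by (rule lin_sum[symmetric]) (simp_all add: Lin_add Lin_smult)
  also have "\<dots> = Lin (\<lambda>l. tY l i j) p"
    using coordP_spec[of p a b] by simp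
  finally show ?thesis .
qed

lemma fa_on_tY: "i \<in> {1..n} \<Longrightarrow> j \<in> {1..n} \<Longrightarrow> fa_on (gens n) (tY r i j)"
  by (auto simp: tY_def fa_one_eq gens_def intro: fa_on_gen)

lemma fa_on_Lin: "i \<in> {1..n} \<Longrightarrow> j \<in> {1..n} \<Longrightarrow> fa_on (gens n) (Lin (\<lambda>l. tY l i j) p)"
  unfolding Lin_def by (intro fa_on_sum fa_on_mult fa_on_sc fa_on_tY)
lemma fa_on_Lam: "i \<in> {1..n} \<Longrightarrow> j \<in> {1..n} \<Longrightarrow> fa_on (gens n) (Lam a b (\<lambda>l. tY l i j) p)"
  unfolding Lam_def by (intro fa_on_sum fa_on_mult fa_on_sc fa_on_tY)

lemma x_monom: "[:0, 1:] * monom (1::complex) r = monom 1 (Suc r)"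
  by (simp add: monom_Suc)

lemma Lam_Pprev: "Lam a b (\<lambda>l. tY l i j) (Pprev a b r) = tO_prev r i j"
  by (simp add: Pprev_def tO_prev_def Lam_P)

lemma Lam_shift: "Lam a b (\<lambda>l. tY l i j) ([:0, 1:] * pseq a b r) = tO_shift a b r i j"
  unfolding pseq_shift by (simp add: Lam_add Lam_smult Lam_P Lam_Pprev tO_shift_def fa_smult_eq)


theorem mainTheorem1:
  fixes n :: nat and a b :: "nat \<Rightarrow> complex"
  assumes "n \<ge> 1"
    and "b 0 = 0"
    and "\<forall>m\<ge>1. b m \<noteq> 0"
  shows "induces_iso (gens n) (oy_rels n a b) (gens n) (yangian_rels n) (Wmap a b)
    \<and> (\<forall>i\<in>{1..n}. \<forall>j\<in>{1..n}. \<forall>l.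
         fa_subst (Wmap a b) (tO l i j) = z0_coeff (pseq a b l) (\<lambda>r. tY r i j)
       \<and> z0_coeff (pseq a b l) (\<lambda>r. tY r i j)
           = (\<Sum>m\<le>l. fa_smult (coeff (pseq a b l) m) (tY m i j)))"
proof -
  let ?G = "gens n"
  let ?I1 = "fa_ideal ?G (oy_rels n a b)"
  let ?I2 = "fa_ideal ?G (yangian_rels n)"
  let ?W = "Wmap a b"
  let ?V = "Vmap a b"
  have Wg: "?W g = Lin (\<lambda>l. tY l i j) (pseq a b r)" if "g = (i, j, r)" "g \<in> ?G" for g i j r
  proof -
    have "?W g = fa_subst ?W (tY r i j)" using that by (simp add: tY_def gens_def)
    then show ?thesis by (simp add: W_tY)
  qed
  have Vg: "?V g = Lam a b (\<lambda>l. tY l i j) (monom 1 r)" if "g = (i, j, r)" for g i j r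
    using that by (simp add: Vmap_def)
  have tYg: "tY r i j = fa_gen g" if "g = (i, j, r)" "g \<in> ?G" for g i j r
    using that by (simp add: tY_def gens_def)
  have Won: "\<forall>g\<in>?G. fa_on ?G (?W g)"
  proof
    fix g assume g: "g \<in> ?G"
    obtain i j r where e: "g = (i, j, r)" by (cases g)
    have "i \<in> {1..n}" "j \<in> {1..n}" using g e by (auto simp: gens_def)
    then show "fa_on ?G (?W g)" using Wg[OF e g] fa_on_Lin by simp
  qed
  have Von: "\<forall>g\<in>?G. fa_on ?G (?V g)"
  proof
    fix g assume g: "g \<in> ?G"
    obtain i j r where e: "g = (i, j, r)" by (cases g)
    have "i \<in> {1..n}" "j \<in> {1..n}" using g e by (auto simp: gens_def)
    then show "fa_on ?G (?V g)" using Vg[OF e] fa_on_Lam by simp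
  qed
  have VW: "fa_subst ?V (?W g) = fa_gen g" if "g \<in> ?G" for g
    using that by (cases g) (auto simp: Wg V_Lin Lam_P tYg)
  have WV: "fa_subst ?W (?V g) = fa_gen g" if "g \<in> ?G" for g
    using that by (cases g) (auto simp: Vg W_Lam Lin_monom tYg)
  have W_Rel: "fa_subst ?W (Rel (Lam a b (\<lambda>l. tY l i j)) (Lam a b (\<lambda>l. tY l k m))
       (Lam a b (\<lambda>l. tY l k j)) (Lam a b (\<lambda>l. tY l i m)) p q)
     = Rel (Lin (\<lambda>l. tY l i j)) (Lin (\<lambda>l. tY l k m)) (Lin (\<lambda>l. tY l k j)) (Lin (\<lambda>l. tY l i m)) p q"
    for i j k m p q
    by (simp add: Rel_def fa_subst_diff fa_subst_mult W_Lam)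
  have V_Rel: "fa_subst ?V (Rel (Lin (\<lambda>l. tY l i j)) (Lin (\<lambda>l. tY l k m))
       (Lin (\<lambda>l. tY l k j)) (Lin (\<lambda>l. tY l i m)) p q)
     = Rel (Lam a b (\<lambda>l. tY l i j)) (Lam a b (\<lambda>l. tY l k m)) (Lam a b (\<lambda>l. tY l k j)) (Lam a b (\<lambda>l. tY l i m)) p q"
    for i j k m p q
    by (simp add: Rel_def fa_subst_diff fa_subst_mult V_Lin)
  have Yrel: "Rel (Lin (\<lambda>l. tY l i j)) (Lin (\<lambda>l. tY l k m)) (Lin (\<lambda>l. tY l k j)) (Lin (\<lambda>l. tY l i m))
       (monom 1 r) (monom 1 s) \<in> ?I2"
    if "i \<in> {1..n}" "j \<in> {1..n}" "k \<in> {1..n}" "m \<in> {1..n}" for i j k m r s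
  proof -
    have "Rel (Lin (\<lambda>l. tY l i j)) (Lin (\<lambda>l. tY l k m)) (Lin (\<lambda>l. tY l k j)) (Lin (\<lambda>l. tY l i m))
       (monom 1 r) (monom 1 s) \<in> yangian_rels n"
    proof -
      have e: "Rel (Lin (\<lambda>l. tY l i j)) (Lin (\<lambda>l. tY l k m)) (Lin (\<lambda>l. tY l k j)) (Lin (\<lambda>l. tY l i m))
       (monom 1 r) (monom 1 s) = fa_comm (tY (r+1) i j) (tY s k m) - fa_comm (tY r i j) (tY (s+1) k m)
        - (fa_mult (tY r k j) (tY s i m) - fa_mult (tY s k j) (tY r i m))"
        unfolding Rel_def x_monom Lin_monom by (simp add: fa_comm_eq fa_mult_eq)
      show ?thesis unfolding e yangian_rels_def using that by blast
    qed
    then show ?thesis by (rule fa_ideal.base)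
  qed
  have Orel: "Rel (Lam a b (\<lambda>l. tY l i j)) (Lam a b (\<lambda>l. tY l k m)) (Lam a b (\<lambda>l. tY l k j)) (Lam a b (\<lambda>l. tY l i m))
       (pseq a b r) (pseq a b s) \<in> ?I1"
    if "i \<in> {1..n}" "j \<in> {1..n}" "k \<in> {1..n}" "m \<in> {1..n}" for i j k m r s
  proof -
    have "Rel (Lam a b (\<lambda>l. tY l i j)) (Lam a b (\<lambda>l. tY l k m)) (Lam a b (\<lambda>l. tY l k j)) (Lam a b (\<lambda>l. tY l i m))
       (pseq a b r) (pseq a b s) \<in> oy_rels n a b"
    proof -
      have e: "Rel (Lam a b (\<lambda>l. tY l i j)) (Lam a b (\<lambda>l. tY l k m)) (Lam a b (\<lambda>l. tY l k j)) (Lam a b (\<lambda>l. tY l i m))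
       (pseq a b r) (pseq a b s) = fa_comm (tO_shift a b r i j) (tO s k m) - fa_comm (tO r i j) (tO_shift a b s k m)
        - (fa_mult (tO r k j) (tO s i m) - fa_mult (tO s k j) (tO r i m))"
        unfolding Rel_def Lam_shift Lam_P by (simp add: fa_comm_eq fa_mult_eq)
      show ?thesis unfolding e oy_rels_def using that by blast
    qed
    then show ?thesis by (rule fa_ideal.base)
  qed
  have spanM: "\<exists>N c. p = (\<Sum>l\<le>N. smult (c l) (monom 1 l))" for p :: "complex poly"
    using monom_span[of p] by blast
  have spanP: "\<exists>N c. p = (\<Sum>l\<le>N. smult (c l) (pseq a b l))" for p
    using P_span[of p "degree p" a b] by blast
  have Wrels: "\<forall>r\<in>oy_rels n a b. fa_subst ?W r \<in> ?I2"
  proof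
    fix x assume "x \<in> oy_rels n a b"
    then obtain r s i j k m where ijkm: "i \<in> {1..n}" "j \<in> {1..n}" "k \<in> {1..n}" "m \<in> {1..n}"
      and x: "x = Rel (Lam a b (\<lambda>l. tY l i j)) (Lam a b (\<lambda>l. tY l k m)) (Lam a b (\<lambda>l. tY l k j)) (Lam a b (\<lambda>l. tY l i m))
       (pseq a b r) (pseq a b s)"
      unfolding oy_rels_def Rel_def Lam_shift Lam_P by (auto simp: fa_comm_eq fa_mult_eq)
    show "fa_subst ?W x \<in> ?I2"
      unfolding x W_Rel
      by (rule rel_ideal[OF linop_Lin linop_Lin linop_Lin linop_Lin spanM Yrel[OF ijkm]])
  qed
  have Vrels: "\<forall>r\<in>yangian_rels n. fa_subst ?V r \<in> ?I1"
  proof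
    fix x assume "x \<in> yangian_rels n"
    then obtain r s i j k m where ijkm: "i \<in> {1..n}" "j \<in> {1..n}" "k \<in> {1..n}" "m \<in> {1..n}"
      and x: "x = Rel (Lin (\<lambda>l. tY l i j)) (Lin (\<lambda>l. tY l k m)) (Lin (\<lambda>l. tY l k j)) (Lin (\<lambda>l. tY l i m))
       (monom 1 r) (monom 1 s)"
      unfolding yangian_rels_def Rel_def x_monom Lin_monom by (auto simp: fa_comm_eq fa_mult_eq)
    show "fa_subst ?V x \<in> ?I1"
      unfolding x V_Rel
      by (rule rel_ideal[OF linop_Lam linop_Lam linop_Lam linop_Lam spanP Orel[OF ijkm]])
  qed
  have VWx: "fa_subst ?V (fa_subst ?W x) = x" if "fa_on ?G x" for x
    unfolding fa_subst_comp using that VW by (rule fa_subst_id_on)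
  have WVy: "fa_subst ?W (fa_subst ?V y) = y" if "fa_on ?G y" for y
    unfolding fa_subst_comp using that WV by (rule fa_subst_id_on)
  have iso: "induces_iso ?G (oy_rels n a b) ?G (yangian_rels n) ?W"
    unfolding induces_iso_def
  proof (intro conjI allI impI)
    show "\<forall>g\<in>?G. fa_on ?G (?W g)" by (rule Won)
  next
    fix x assume x: "fa_on ?G x"
    show "fa_subst ?W x \<in> ?I2 \<longleftrightarrow> x \<in> ?I1"
    proof
      assume "fa_subst ?W x \<in> ?I2"
      then have "fa_subst ?V (fa_subst ?W x) \<in> ?I1" by (rule ideal_hom[OF Von Vrels])
      then show "x \<in> ?I1" using VWx[OF x] by simp
    next
      assume "x \<in> ?I1"
      then show "fa_subst ?W x \<in> ?I2" by (rule ideal_hom[OF Won Wrels])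
    qed
  next
    fix y assume y: "fa_on ?G y"
    show "\<exists>x. fa_on ?G x \<and> fa_subst ?W x - y \<in> ?I2"
      by (intro exI[of _ "fa_subst ?V y"] conjI fa_on_subst[OF Von y])
        (simp add: WVy[OF y] fa_ideal.zero)
  qed
  show ?thesis
  proof (intro conjI iso ballI allI)
    fix i j l
    show "fa_subst ?W (tO l i j) = z0_coeff (pseq a b l) (\<lambda>r. tY r i j)"
      by (simp add: W_tY z0_Lin)
    show "z0_coeff (pseq a b l) (\<lambda>r. tY r i j) = (\<Sum>m\<le>l. fa_smult (coeff (pseq a b l) m) (tY m i j))"
      by (simp add: z0_coeff_def)
  qed
qed


end
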